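(* For all real $0\le a\le b\le 1$ and all $\epsilon\in(0,\tfrac12)$, $$\frac{(\sqrt b+\sqrt a)^{2(1+\epsilon)}+(\sqrt b-\sqrt a)^{2(1+\epsilon)}}{2}-a^{1+\epsilon}-b^{1+\epsilon}\le (3\epsilon+2\epsilon^2)a+(b^\epsilon-a^\epsilon)a.$$ *)

theory Defs
  imports Complex_Main
begin

end

theory Submission
  imports Defs
begin

lemma dplus:
  fixes y t r :: real
  assumes "0 < y + t"
  shows "DERIV (\<lambda>t. (y + t) powr r) t :> r * (y + t) powr (r - 1)"
proof -
  have d: "DERIV (\<lambda>t. y + t) t :> 1" by (auto intro!: derivative_eq_intros)
  show ?thesis using DERIV_fun_powr[of "\<lambda>t. y + t" 1 t r] d assms by simp
qed

lemma dminus: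
  fixes y t r :: real
  assumes "0 < y - t"
  shows "DERIV (\<lambda>t. (y - t) powr r) t :> - (r * (y - t) powr (r - 1))"
proof -
  have d: "DERIV (\<lambda>t. y - t) t :> -1" by (auto intro!: derivative_eq_intros)
  show ?thesis using DERIV_fun_powr[of "\<lambda>t. y - t" "-1" t r] d assms by simp
qed

lemma concav:
  fixes e x y :: real
  assumes "0 < e" "e < 1/2" "0 \<le> x" "x < y"
  shows "(y + x) powr (2*e) + (y - x) powr (2*e) \<le> 2 * y powr (2*e)"
proof -
  let ?f = "\<lambda>t. (y + t) powr (2*e) + (y - t) powr (2*e)"
  have "?f 0 \<ge> ?f x"
  proof (rule DERIV_nonpos_imp_decreasing_open[of 0 x ?f])
    show "0 \<le> x" by fact
    fix t assume t: "0 < t" "t < x"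
    have "DERIV ?f t :> 2*e*(y+t) powr (2*e-1) + - (2*e*(y-t) powr (2*e-1))"
      using t assms by (intro DERIV_add dplus dminus) auto
    moreover have "(y+t) powr (2*e-1) \<le> (y-t) powr (2*e-1)"
      using t assms by (intro powr_mono2') auto
    ultimately show "\<exists>d. DERIV ?f t :> d \<and> d \<le> 0"
      using assms by (intro exI[of _ "2*e*(y+t) powr (2*e-1) + - (2*e*(y-t) powr (2*e-1))"])
        (auto simp: mult_left_mono)
  next
    show "continuous_on {0..x} ?f"
      using assms by (intro continuous_intros) auto
  qed
  thus ?thesis by simp
qed


lemma Gneg:
  fixes e x y :: real
  assumes "0 < e" "e < 1/2" "0 \<le> x" "x < y"
  shows "(1+e)*((y+x) powr (2*e+1) - (y-x) powr (2*e+1)) - 2*((1+e)*(1+2*e))*x*y powr (2*e) \<le> 0"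
proof -
  let ?c = "(1+e)*(1+2*e)"
  let ?f = "\<lambda>t. (1+e)*((y+t) powr (2*e+1) - (y-t) powr (2*e+1)) - 2*?c*t*y powr (2*e)"
  have "?f 0 \<ge> ?f x"
  proof (rule DERIV_nonpos_imp_decreasing_open[of 0 x ?f])
    show "0 \<le> x" by fact
    fix t assume t: "0 < t" "t < x"
    have e1: "2*e+1-1 = 2*e" by simp
    have "DERIV ?f t :> (1+e)*((2*e+1)*(y+t) powr (2*e+1-1) - - ((2*e+1)*(y-t) powr (2*e+1-1))) - 2*?c*1*y powr (2*e)"
    proof (intro DERIV_diff DERIV_cmult dplus dminus)
      show "DERIV (\<lambda>t. 2*?c*t*y powr (2*e)) t :> 2*?c*1*y powr (2*e)"
        by (auto intro!: derivative_eq_intros)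
    qed (use t assms in auto)
    moreover have "(1+e)*((2*e+1)*(y+t) powr (2*e+1-1) - - ((2*e+1)*(y-t) powr (2*e+1-1))) - 2*?c*1*y powr (2*e)
        = ?c * ((y+t) powr (2*e) + (y-t) powr (2*e) - 2 * y powr (2*e))"
      unfolding e1 by (simp add: algebra_simps)
    moreover have "?c * ((y+t) powr (2*e) + (y-t) powr (2*e) - 2 * y powr (2*e)) \<le> 0"
      using concav[of e t y] t assms by (intro mult_nonneg_nonpos) auto
    ultimately show "\<exists>d. DERIV ?f t :> d \<and> d \<le> 0" by auto
  next
    show "continuous_on {0..x} ?f"
      using assms by (intro continuous_intros) auto
  qed
  thus ?thesis by simp
qed

lemma Hneg:
  fixes e x y :: real
  assumes "0 < e" "e < 1/2" "0 \<le> x" "x \<le> y"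
  shows "((y+x) powr (2*(1+e)) + (y-x) powr (2*(1+e)))/2 - y powr (2*(1+e)) - ((1+e)*(1+2*e))*x^2*y powr (2*e) \<le> 0"
proof -
  let ?c = "(1+e)*(1+2*e)"
  let ?f = "\<lambda>t. ((y+t) powr (2*(1+e)) + (y-t) powr (2*(1+e)))/2 - y powr (2*(1+e)) - ?c*t^2*y powr (2*e)"
  have "?f 0 \<ge> ?f x"
  proof (rule DERIV_nonpos_imp_decreasing_open[of 0 x ?f])
    show "0 \<le> x" by fact
    fix t assume t: "0 < t" "t < x"
    have e1: "2*(1+e)-1 = 2*e+1" by simp
    have "DERIV ?f t :> ((2*(1+e))*(y+t) powr (2*(1+e)-1) + - ((2*(1+e))*(y-t) powr (2*(1+e)-1)))/2 - 0 - ?c*(of_nat 2 * t^(2-1))*y powr (2*e)"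
      using t assms by (intro DERIV_diff DERIV_cmult DERIV_mult DERIV_const dplus dminus DERIV_ident DERIV_add DERIV_divide DERIV_pow derivative_eq_intros) auto
    moreover have "((2*(1+e))*(y+t) powr (2*(1+e)-1) + - ((2*(1+e))*(y-t) powr (2*(1+e)-1)))/2 - 0 - ?c*(of_nat 2 * t^(2-1))*y powr (2*e)
        = (1+e)*((y+t) powr (2*e+1) - (y-t) powr (2*e+1)) - 2*?c*t*y powr (2*e)"
      unfolding e1 by (simp add: field_simps)
    moreover have "(1+e)*((y+t) powr (2*e+1) - (y-t) powr (2*e+1)) - 2*?c*t*y powr (2*e) \<le> 0"
      using Gneg[of e t y] t assms by auto
    ultimately show "\<exists>d. DERIV ?f t :> d \<and> d \<le> 0" by auto
  next
    show "continuous_on {0..x} ?f"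
      using assms by (intro continuous_intros continuous_on_powr') auto
  qed
  thus ?thesis by simp
qed


theorem lemma2p4:
  fixes a b \<epsilon> :: real
  assumes "0 \<le> a" and "a \<le> b" and "b \<le> 1"
    and "0 < \<epsilon>" and "\<epsilon> < 1/2"
  shows "((sqrt b + sqrt a) powr (2 * (1 + \<epsilon>)) + (sqrt b - sqrt a) powr (2 * (1 + \<epsilon>))) / 2
           - a powr (1 + \<epsilon>) - b powr (1 + \<epsilon>)
         \<le> (3 * \<epsilon> + 2 * \<epsilon>^2) * a + (b powr \<epsilon> - a powr \<epsilon>) * a"
proof -
  let ?c = "(1+\<epsilon>)*(1+2*\<epsilon>)"
  have H: "((sqrt b + sqrt a) powr (2*(1+\<epsilon>)) + (sqrt b - sqrt a) powr (2*(1+\<epsilon>)))/2 - sqrt b powr (2*(1+\<epsilon>)) - ?c*(sqrt a)^2*sqrt b powr (2*\<epsilon>) \<le> 0"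
    using Hneg[of \<epsilon> "sqrt a" "sqrt b"] assms by (simp add: real_sqrt_le_mono)
  have b0: "0 \<le> b" using assms by simp
  have s1: "sqrt b powr (2*(1+\<epsilon>)) = b powr (1+\<epsilon>)"
  proof -
    have "sqrt b powr (2*(1+\<epsilon>)) = (b powr (1/2)) powr (2*(1+\<epsilon>))"
      using b0 by (simp add: powr_half_sqrt)
    also have "\<dots> = b powr (1/2 * (2*(1+\<epsilon>)))" by (rule powr_powr)
    also have "1/2 * (2*(1+\<epsilon>)) = 1 + \<epsilon>" by simp
    finally show ?thesis .
  qed
  have s2: "sqrt b powr (2*\<epsilon>) = b powr \<epsilon>"
    using b0 by (simp add: powr_half_sqrt[symmetric] powr_powr)
  have s3: "(sqrt a)^2 = a" using assms by simp
  have s4: "a powr (1+\<epsilon>) = a powr \<epsilon> * a"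
    using assms by (cases "a = 0") (auto simp: powr_add)
  have be: "b powr \<epsilon> \<le> 1" using assms b0
    by (intro powr_le1) auto
  have "(?c - 1) * a * b powr \<epsilon> \<le> (?c - 1) * a"
    using be assms by (intro mult_left_le) (auto simp: algebra_simps)
  thus ?thesis using H unfolding s1 s2 s3 s4 by (simp add: algebra_simps power2_eq_square)
qed

end
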